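(* Let $J\subseteq\mathcal I_{int}$ be finite and let $\kappa,\kappa'$ be $J$-interval words over $\Sigma$ with $\kappa\sim\kappa'$. If for every $I\in J$, $\mathsf{first}(\kappa,I)=\mathsf{first}(\kappa',I)$ and $\mathsf{last}(\kappa,I)=\mathsf{last}(\kappa',I)$, then $\kappa\cong\kappa'$.
   Context: Fix a finite set $\Sigma$ of propositions. A timed word over $\Sigma$ is a finite sequence $\rho=(\sigma_1,\tau_1)\cdots(\sigma_n,\tau_n)$ with $\emptyset\neq\sigma_i\subseteq\Sigma$, $\tau_i\in\mathbb R_{\ge0}$, $\tau_1=0$, $\tau_i\le\tau_j$ for $i\le j$; $dom(\rho)=\{1,\dots,n\}$; a pointed timed word is a pair $(\rho,i)$ with $i\in dom(\rho)$. $\mathcal I_{int}$ is the set of open, half-open or closed real intervals with endpoints in $\mathbb Z\cup\{-\infty,\infty\}$. Interval words: let $J\subseteq\mathcal I_{int}$ be finite and $\mathsf{anch}$ a fresh symbol. A $J$-interval word over $\Sigma$ is a finite word $\kappa=a_1\cdots a_n$ with $a_j\subseteq\Sigma\cup J\cup\{\mathsf{anch}\}$ such that exactly one position $i$, denoted $\mathsf{anch}(\kappa)$, has $\mathsf{anch}\in a_i$, and $a_i\subseteq\Sigma\cup\{\mathsf{anch}\}$ there. For $I\in J$, position $j$ is $I$-time restricted iff $I\in a_j$. A pointed timed word $(\rho,i)$ with $\rho=(\sigma_1,\tau_1)\cdots(\sigma_m,\tau_m)$ is consistent with $\kappa$ iff $m=n$, $i=\mathsf{anch}(\kappa)$, $\sigma_j=a_j\cap\Sigma$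 for all $j$, and $\tau_j-\tau_i\in I$ for all $j\neq i$ and all $I\in a_j\cap J$. $\mathsf{Time}(\kappa)$ is the set of pointed timed words consistent with $\kappa$. Interval words $\kappa=a_1\cdots a_n$, $\kappa'=b_1\cdots b_m$ are similar ($\kappa\sim\kappa'$) iff $n=m$, $a_j\cap\Sigma=b_j\cap\Sigma$ for all $j$ and $\mathsf{anch}(\kappa)=\mathsf{anch}(\kappa')$; congruent ($\kappa\cong\kappa'$) iff $\mathsf{Time}(\kappa)=\mathsf{Time}(\kappa')$. $\mathsf{first}(\kappa,I)$ and $\mathsf{last}(\kappa,I)$ denote the least and greatest $I$-time restricted positions of $\kappa$ ($\bot$ if there is none). *)

theory Defs
  imports Main "HOL-Library.Extended_Real"
begin

datatype lbound = LNegInf | LPosInf | LClosed int | LOpen int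
datatype ubound = UNegInf | UPosInf | UClosed int | UOpen int

fun lower_ok :: "lbound \<Rightarrow> real \<Rightarrow> bool" where
  "lower_ok LNegInf x = True"
| "lower_ok LPosInf x = False"
| "lower_ok (LClosed a) x = (real_of_int a \<le> x)"
| "lower_ok (LOpen a) x = (real_of_int a < x)"

fun upper_ok :: "ubound \<Rightarrow> real \<Rightarrow> bool" where
  "upper_ok UNegInf x = False"
| "upper_ok UPosInf x = True"
| "upper_ok (UClosed b) x = (x \<le> real_of_int b)"
| "upper_ok (UOpen b) x = (x < real_of_int b)"

definition interval_set :: "lbound \<Rightarrow> ubound \<Rightarrow> real set" where
  "interval_set l u = {x. lower_ok l x \<and> upper_ok u x}"

definition Iint :: "real set set" where
  "Iint = {interval_set l u | l u. True}"

(* Timed words: lists of (letter, timestamp), positions 0-based *)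
definition timed_word :: "'p set \<Rightarrow> ('p set \<times> real) list \<Rightarrow> bool" where
  "timed_word \<Sigma> \<rho> \<longleftrightarrow> \<rho> \<noteq> [] \<and>
     (\<forall>j<length \<rho>. fst (\<rho>!j) \<noteq> {} \<and> fst (\<rho>!j) \<subseteq> \<Sigma> \<and> snd (\<rho>!j) \<ge> 0) \<and>
     snd (\<rho>!0) = 0 \<and>
     (\<forall>i j. i \<le> j \<and> j < length \<rho> \<longrightarrow> snd (\<rho>!i) \<le> snd (\<rho>!j))"

definition pointed_timed_word :: "'p set \<Rightarrow> ('p set \<times> real) list \<times> nat \<Rightarrow> bool" where
  "pointed_timed_word \<Sigma> \<rho>i \<longleftrightarrow> timed_word \<Sigma> (fst \<rho>i) \<and> snd \<rho>i < length (fst \<rho>i)"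

datatype 'p isym = Prop 'p | Intv "real set" | Anch

type_synonym 'p iword = "'p isym set list"

definition props :: "'p isym set \<Rightarrow> 'p set" where
  "props a = {p. Prop p \<in> a}"

definition intvs :: "'p isym set \<Rightarrow> real set set" where
  "intvs a = {I. Intv I \<in> a}"

definition interval_word :: "'p set \<Rightarrow> real set set \<Rightarrow> 'p iword \<Rightarrow> bool" where
  "interval_word \<Sigma> J \<kappa> \<longleftrightarrow>
     (\<forall>j<length \<kappa>. \<kappa>!j \<subseteq> Prop ` \<Sigma> \<union> Intv ` J \<union> {Anch}) \<and>
     (\<exists>!i. i < length \<kappa> \<and> Anch \<in> \<kappa>!i) \<and>
     (\<forall>i<length \<kappa>. Anch \<in> \<kappa>!i \<longrightarrow> \<kappa>!i \<subseteq> Prop ` \<Sigma> \<union> {Anch})"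

definition anch :: "'p iword \<Rightarrow> nat" where
  "anch \<kappa> = (THE i. i < length \<kappa> \<and> Anch \<in> \<kappa>!i)"

definition consistent :: "('p set \<times> real) list \<times> nat \<Rightarrow> 'p iword \<Rightarrow> bool" where
  "consistent \<rho>i \<kappa> \<longleftrightarrow> (let \<rho> = fst \<rho>i; i = snd \<rho>i in
     length \<rho> = length \<kappa> \<and> i = anch \<kappa> \<and>
     (\<forall>j<length \<kappa>. fst (\<rho>!j) = props (\<kappa>!j)) \<and>
     (\<forall>j<length \<kappa>. j \<noteq> i \<longrightarrow> (\<forall>I\<in>intvs (\<kappa>!j). snd (\<rho>!j) - snd (\<rho>!i) \<in> I)))"

definition Time :: "'p set \<Rightarrow> 'p iword \<Rightarrow> (('p set \<times> real) list \<times> nat) set" where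
  "Time \<Sigma> \<kappa> = {\<rho>i. pointed_timed_word \<Sigma> \<rho>i \<and> consistent \<rho>i \<kappa>}"

definition similar :: "'p iword \<Rightarrow> 'p iword \<Rightarrow> bool" where
  "similar \<kappa> \<kappa>' \<longleftrightarrow> length \<kappa> = length \<kappa>' \<and>
     (\<forall>j<length \<kappa>. props (\<kappa>!j) = props (\<kappa>'!j)) \<and> anch \<kappa> = anch \<kappa>'"

definition congruent :: "'p set \<Rightarrow> 'p iword \<Rightarrow> 'p iword \<Rightarrow> bool" where
  "congruent \<Sigma> \<kappa> \<kappa>' \<longleftrightarrow> Time \<Sigma> \<kappa> = Time \<Sigma> \<kappa>'"

(* first / last I-time restricted positions; None plays the role of \<bottom> *)
definition first_pos :: "'p iword \<Rightarrow> real set \<Rightarrow> nat option" where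
  "first_pos \<kappa> I = (if \<exists>j<length \<kappa>. Intv I \<in> \<kappa>!j
      then Some (LEAST j. j < length \<kappa> \<and> Intv I \<in> \<kappa>!j) else None)"

definition last_pos :: "'p iword \<Rightarrow> real set \<Rightarrow> nat option" where
  "last_pos \<kappa> I = (if \<exists>j<length \<kappa>. Intv I \<in> \<kappa>!j
      then Some (GREATEST j. j < length \<kappa> \<and> Intv I \<in> \<kappa>!j) else None)"

end

theory Submission
  imports Defs
begin

lemma Iint_convex:
  assumes "I \<in> Iint" "a \<in> I" "b \<in> I" "a \<le> x" "x \<le> b"
  shows "x \<in> I"
proof -
  obtain l u where I: "I = interval_set l u" using assms(1) unfolding Iint_def by blast
  show ?thesis using assms(2-5) unfolding I interval_set_def
    by (cases l; cases u; auto)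
qed

lemma first_pos_SomeD:
  assumes "first_pos \<kappa> I = Some f"
  shows "f < length \<kappa> \<and> Intv I \<in> \<kappa>!f \<and> (\<forall>j<length \<kappa>. Intv I \<in> \<kappa>!j \<longrightarrow> f \<le> j)"
proof -
  have ex: "\<exists>j. j < length \<kappa> \<and> Intv I \<in> \<kappa>!j" and f: "f = (LEAST j. j < length \<kappa> \<and> Intv I \<in> \<kappa>!j)"
    using assms unfolding first_pos_def by (auto split: if_splits)
  show ?thesis using LeastI_ex[OF ex] Least_le[of "\<lambda>j. j < length \<kappa> \<and> Intv I \<in> \<kappa>!j"] f by auto
qed

lemma last_pos_SomeD:
  assumes "last_pos \<kappa> I = Some f"
  shows "f < length \<kappa> \<and> Intv I \<in> \<kappa>!f \<and> (\<forall>j<length \<kappa>. Intv I \<in> \<kappa>!j \<longrightarrow> j \<le> f)"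
proof -
  obtain j0 where j0: "j0 < length \<kappa>" "Intv I \<in> \<kappa>!j0" and f: "f = (GREATEST j. j < length \<kappa> \<and> Intv I \<in> \<kappa>!j)"
    using assms unfolding last_pos_def by (auto split: if_splits)
  have b: "\<forall>y. y < length \<kappa> \<and> Intv I \<in> \<kappa>!y \<longrightarrow> y \<le> length \<kappa>" by auto
  show ?thesis
    using GreatestI_nat[of "\<lambda>j. j < length \<kappa> \<and> Intv I \<in> \<kappa>!j" j0 "length \<kappa>"]
      Greatest_le_nat[of "\<lambda>j. j < length \<kappa> \<and> Intv I \<in> \<kappa>!j" _ "length \<kappa>"] j0 f by auto
qed

lemma pos_exists:
  assumes "j < length \<kappa>" "Intv I \<in> \<kappa>!j"
  shows "\<exists>f. first_pos \<kappa> I = Some f" "\<exists>l. last_pos \<kappa> I = Some l"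
  using assms unfolding first_pos_def last_pos_def by auto

lemma anch_props:
  assumes "interval_word \<Sigma> J \<kappa>"
  shows "anch \<kappa> < length \<kappa> \<and> (\<forall>I. Intv I \<notin> \<kappa>!(anch \<kappa>))"
proof -
  have u: "\<exists>!i. i < length \<kappa> \<and> Anch \<in> \<kappa>!i" using assms unfolding interval_word_def by blast
  have a: "anch \<kappa> < length \<kappa> \<and> Anch \<in> \<kappa>!(anch \<kappa>)"
    unfolding anch_def using theI'[OF u] by blast
  then have "\<kappa>!(anch \<kappa>) \<subseteq> Prop ` \<Sigma> \<union> {Anch}" using assms unfolding interval_word_def by blast
  then show ?thesis using a by auto
qed

lemma one_dir:
  assumes "J \<subseteq> Iint"
    and w: "interval_word \<Sigma> J \<kappa>" and w': "interval_word \<Sigma> J \<kappa>'"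
    and s: "similar \<kappa> \<kappa>'"
    and fl: "\<forall>I\<in>J. first_pos \<kappa> I = first_pos \<kappa>' I \<and> last_pos \<kappa> I = last_pos \<kappa>' I"
    and t: "\<rho>i \<in> Time \<Sigma> \<kappa>"
  shows "\<rho>i \<in> Time \<Sigma> \<kappa>'"
proof -
  obtain \<rho> i where ri: "\<rho>i = (\<rho>, i)" by (cases \<rho>i)
  have ptw: "pointed_timed_word \<Sigma> (\<rho>, i)" and c: "consistent (\<rho>, i) \<kappa>"
    using t ri unfolding Time_def by auto
  have tw: "timed_word \<Sigma> \<rho>" using ptw unfolding pointed_timed_word_def by simp
  have mono: "\<And>a b. a \<le> b \<Longrightarrow> b < length \<rho> \<Longrightarrow> snd (\<rho>!a) \<le> snd (\<rho>!b)"
    using tw unfolding timed_word_def by blast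
  have len: "length \<rho> = length \<kappa>" and ia: "i = anch \<kappa>"
    and pr: "\<forall>j<length \<kappa>. fst (\<rho>!j) = props (\<kappa>!j)"
    and cI: "\<forall>j<length \<kappa>. j \<noteq> i \<longrightarrow> (\<forall>I\<in>intvs (\<kappa>!j). snd (\<rho>!j) - snd (\<rho>!i) \<in> I)"
    using c unfolding consistent_def by (auto simp: Let_def)
  have sl: "length \<kappa> = length \<kappa>'" and sp: "\<forall>j<length \<kappa>. props (\<kappa>!j) = props (\<kappa>'!j)"
    and sa: "anch \<kappa> = anch \<kappa>'" using s unfolding similar_def by auto
  have an: "\<forall>I. Intv I \<notin> \<kappa>!(anch \<kappa>)" using anch_props[OF w] by blast
  have "\<forall>I\<in>intvs (\<kappa>'!j). snd (\<rho>!j) - snd (\<rho>!i) \<in> I" if j: "j < length \<kappa>'" "j \<noteq> i" for j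
  proof
    fix I assume "I \<in> intvs (\<kappa>'!j)"
    then have Ij: "Intv I \<in> \<kappa>'!j" unfolding intvs_def by simp
    have "I \<in> J" using w' j Ij unfolding interval_word_def by blast
    then have IJ: "I \<in> Iint" and e: "first_pos \<kappa> I = first_pos \<kappa>' I" "last_pos \<kappa> I = last_pos \<kappa>' I"
      using assms(1) fl by auto
    obtain f where f: "first_pos \<kappa>' I = Some f" using pos_exists(1)[OF j(1) Ij] by blast
    obtain l where l: "last_pos \<kappa>' I = Some l" using pos_exists(2)[OF j(1) Ij] by blast
    have fj: "f \<le> j" using first_pos_SomeD[OF f] j Ij by blast
    have jl: "j \<le> l" using last_pos_SomeD[OF l] j Ij by blast
    have fk: "f < length \<kappa> \<and> Intv I \<in> \<kappa>!f" using first_pos_SomeD[of \<kappa> I f] e f by simp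
    have lk: "l < length \<kappa> \<and> Intv I \<in> \<kappa>!l" using last_pos_SomeD[of \<kappa> I l] e l by simp
    have fi: "f \<noteq> i" using fk an ia by metis
    have li: "l \<noteq> i" using lk an ia by metis
    have A: "snd (\<rho>!f) - snd (\<rho>!i) \<in> I" using cI fk fi unfolding intvs_def by auto
    have B: "snd (\<rho>!l) - snd (\<rho>!i) \<in> I" using cI lk li unfolding intvs_def by auto
    have "snd (\<rho>!f) \<le> snd (\<rho>!j)" using mono[OF fj] j sl len by simp
    moreover have "snd (\<rho>!j) \<le> snd (\<rho>!l)" using mono[OF jl] lk len by simp
    ultimately show "snd (\<rho>!j) - snd (\<rho>!i) \<in> I"
      using Iint_convex[OF IJ A B] by simp
  qed
  then have "consistent (\<rho>, i) \<kappa>'"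
    unfolding consistent_def using len ia pr sl sp sa by (auto simp: Let_def)
  then show ?thesis using ptw ri unfolding Time_def by simp
qed

theorem lemma6:
  fixes \<Sigma> :: "'p set" and J :: "real set set" and \<kappa> \<kappa>' :: "'p iword"
  assumes "finite \<Sigma>" and "finite J" and "J \<subseteq> Iint"
    and "interval_word \<Sigma> J \<kappa>" and "interval_word \<Sigma> J \<kappa>'"
    and "similar \<kappa> \<kappa>'"
    and "\<forall>I\<in>J. first_pos \<kappa> I = first_pos \<kappa>' I \<and> last_pos \<kappa> I = last_pos \<kappa>' I"
  shows "congruent \<Sigma> \<kappa> \<kappa>'"
proof -
  have s': "similar \<kappa>' \<kappa>" using assms(6) unfolding similar_def by auto
  show ?thesis unfolding congruent_def
    using one_dir[OF assms(3,4,5,6,7)] one_dir[OF assms(3,5,4) s'] assms(7) by auto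
qed

end
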